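(* Let $\rho^{AB}=\frac14\big(\mathbb{I}\otimes\mathbb{I}+\vec x\cdot\vec\sigma\otimes\mathbb{I}+\sum_{i=1}^3 t_i\,\sigma_i\otimes\sigma_i\big)$ be a two-qubit density matrix (i.e. $\vec y=0$) with $\vec x\in\mathbb{R}^3$ and $T=\mathrm{diag}\{t_1,t_2,t_3\}$ satisfying $T^t\vec x=0$. Then $$\min_{\{\Pi_k^B\}}S(\rho^A|\{\Pi_k^B\})=h_2\!\left(\frac{1+\sqrt{|\vec x|^2+t_{\max}^2}}{2}\right),\qquad t_{\max}=\max\{|t_1|,|t_2|,|t_3|\},$$ the minimum being over all von Neumann measurements on qubit $B$, and it is attained when the measurement direction $\hat n$ is an eigenvector of $T^tT$ for its largest eigenvalue $t_{\max}^2$.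
   Context: $\sigma_i$ are the Pauli matrices, $\vec a\cdot\vec\sigma=\sum_i a_i\sigma_i$. A von Neumann measurement on $B$ with direction $\hat n$ (unit vector in $\mathbb{R}^3$) is $\Pi_k^B=\frac12(\mathbb{I}\pm\hat n\cdot\vec\sigma)$, $k=0,1$; $p_k=\mathrm{Tr}[(\mathbb{I}\otimes\Pi_k^B)\rho^{AB}(\mathbb{I}\otimes\Pi_k^B)]$, $\rho^A_k=\mathrm{Tr}_B[(\mathbb{I}\otimes\Pi_k^B)\rho^{AB}(\mathbb{I}\otimes\Pi_k^B)]/p_k$, and $S(\rho^A|\{\Pi_k^B\})=\sum_kp_kS(\rho^A_k)$ with $S(\rho)=-\mathrm{Tr}(\rho\log_2\rho)$. $h_2(x)=-x\log_2x-(1-x)\log_2(1-x)$. *)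

theory Defs
  imports Complex_Main "Jordan_Normal_Form.Char_Poly"
begin

definition mtrace :: "complex mat \<Rightarrow> complex" where
  "mtrace A = (\<Sum>i<dim_row A. A $$ (i,i))"

text \<open>Kronecker (tensor) product of matrices, first factor = system A.\<close>
definition kron :: "complex mat \<Rightarrow> complex mat \<Rightarrow> complex mat" where
  "kron A B = mat (dim_row A * dim_row B) (dim_col A * dim_col B)
     (\<lambda>(i,j). A $$ (i div dim_row B, j div dim_col B) * B $$ (i mod dim_row B, j mod dim_col B))"

definition ptrace_B :: "complex mat \<Rightarrow> complex mat" where
  "ptrace_B M = mat 2 2 (\<lambda>(i,j). \<Sum>k<2. M $$ (2*i+k, 2*j+k))"

definition hermitian :: "complex mat \<Rightarrow> bool" where
  "hermitian A \<longleftrightarrow> square_mat A \<and>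
     (\<forall>i<dim_row A. \<forall>j<dim_row A. A $$ (i,j) = cnj (A $$ (j,i)))"

definition psd :: "complex mat \<Rightarrow> bool" where
  "psd A \<longleftrightarrow> hermitian A \<and>
     (\<forall>v \<in> carrier_vec (dim_row A). 0 \<le> Re (\<Sum>i<dim_row A. cnj (v $ i) * (A *\<^sub>v v) $ i))"

definition density_matrix :: "nat \<Rightarrow> complex mat \<Rightarrow> bool" where
  "density_matrix n A \<longleftrightarrow> A \<in> carrier_mat n n \<and> psd A \<and> mtrace A = 1"

definition pauli :: "nat \<Rightarrow> complex mat" where
  "pauli i = (if i = 0 then mat_of_rows_list 2 [[0, 1], [1, 0]]
              else if i = 1 then mat_of_rows_list 2 [[0, -\<i>], [\<i>, 0]]
              else mat_of_rows_list 2 [[1, 0], [0, -1]])"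
  \<comment> \<open>index 0,1,2 stands for sigma_1, sigma_2, sigma_3\<close>

definition dot_sigma :: "real vec \<Rightarrow> complex mat" where
  "dot_sigma a = complex_of_real (a $ 0) \<cdot>\<^sub>m pauli 0 + complex_of_real (a $ 1) \<cdot>\<^sub>m pauli 1
               + complex_of_real (a $ 2) \<cdot>\<^sub>m pauli 2"

definition rho_AB :: "real vec \<Rightarrow> real vec \<Rightarrow> complex mat" where
  "rho_AB x t = (1/4 :: complex) \<cdot>\<^sub>m
     (kron (1\<^sub>m 2) (1\<^sub>m 2) + kron (dot_sigma x) (1\<^sub>m 2)
      + complex_of_real (t $ 0) \<cdot>\<^sub>m kron (pauli 0) (pauli 0)
      + complex_of_real (t $ 1) \<cdot>\<^sub>m kron (pauli 1) (pauli 1)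
      + complex_of_real (t $ 2) \<cdot>\<^sub>m kron (pauli 2) (pauli 2))"

definition Tmat :: "real vec \<Rightarrow> real mat" where
  "Tmat t = mat 3 3 (\<lambda>(i,j). if i = j then t $ i else 0)"

definition eta :: "real \<Rightarrow> real" where
  "eta r = (if r \<le> 0 then 0 else - r * log 2 r)"

definition h2 :: "real \<Rightarrow> real" where
  "h2 x = eta x + eta (1 - x)"

text \<open>von Neumann entropy: sum over the eigenvalues (roots of the characteristic
  polynomial, counted with algebraic multiplicity) of - lambda log2 lambda.\<close>
definition vn_entropy :: "complex mat \<Rightarrow> real" where
  "vn_entropy A = (\<Sum>l \<in> {l. poly (char_poly A) l = 0}.
                     real (order l (char_poly A)) * eta (Re l))"

definition proj_B :: "real vec \<Rightarrow> nat \<Rightarrow> complex mat" where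
  "proj_B n k = (1/2 :: complex) \<cdot>\<^sub>m
     (if k = 0 then 1\<^sub>m 2 + dot_sigma n else 1\<^sub>m 2 - dot_sigma n)"

definition post_meas :: "complex mat \<Rightarrow> real vec \<Rightarrow> nat \<Rightarrow> complex mat" where
  "post_meas \<rho> n k = kron (1\<^sub>m 2) (proj_B n k) * \<rho> * kron (1\<^sub>m 2) (proj_B n k)"

definition meas_prob :: "complex mat \<Rightarrow> real vec \<Rightarrow> nat \<Rightarrow> real" where
  "meas_prob \<rho> n k = Re (mtrace (post_meas \<rho> n k))"

definition rho_A_cond :: "complex mat \<Rightarrow> real vec \<Rightarrow> nat \<Rightarrow> complex mat" where
  "rho_A_cond \<rho> n k = complex_of_real (1 / meas_prob \<rho> n k) \<cdot>\<^sub>m ptrace_B (post_meas \<rho> n k)"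

definition cond_entropy :: "complex mat \<Rightarrow> real vec \<Rightarrow> real" where
  "cond_entropy \<rho> n = (\<Sum>k<2. meas_prob \<rho> n k * vn_entropy (rho_A_cond \<rho> n k))"

end

theory Submission
  imports Defs
begin
lemma pauli_dim[simp]: "dim_row (pauli i) = 2" "dim_col (pauli i) = 2"
  by (simp_all add: pauli_def mat_of_rows_list_def)
lemma pauli_ent[simp]:
  "pauli 0 $$ (0,0) = 0" "pauli 0 $$ (0,Suc 0) = 1" "pauli 0 $$ (Suc 0,0) = 1" "pauli 0 $$ (Suc 0,Suc 0) = 0"
  "pauli (Suc 0) $$ (0,0) = 0" "pauli (Suc 0) $$ (0,Suc 0) = -\<i>" "pauli (Suc 0) $$ (Suc 0,0) = \<i>" "pauli (Suc 0) $$ (Suc 0,Suc 0) = 0"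
  "pauli 2 $$ (0,0) = 1" "pauli 2 $$ (0,Suc 0) = 0" "pauli 2 $$ (Suc 0,0) = 0" "pauli 2 $$ (Suc 0,Suc 0) = -1"
  by (simp_all add: pauli_def mat_of_rows_list_def)
lemma ds_dim[simp]: "dim_row (dot_sigma a) = 2" "dim_col (dot_sigma a) = 2"
  by (simp_all add: dot_sigma_def)
lemma ds_ent[simp]:
  "dot_sigma a $$ (0,0) = complex_of_real (a$2)"
  "dot_sigma a $$ (0,Suc 0) = complex_of_real (a$0) - \<i> * complex_of_real (a$Suc 0)"
  "dot_sigma a $$ (Suc 0,0) = complex_of_real (a$0) + \<i> * complex_of_real (a$Suc 0)"
  "dot_sigma a $$ (Suc 0,Suc 0) = - complex_of_real (a$2)"
  by (simp_all add: dot_sigma_def)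
lemma kron_dim[simp]: "dim_row (kron A B) = dim_row A * dim_row B" "dim_col (kron A B) = dim_col A * dim_col B"
  by (simp_all add: kron_def)
lemma kron_ent: "i < dim_row A * dim_row B \<Longrightarrow> j < dim_col A * dim_col B \<Longrightarrow>
  kron A B $$ (i,j) = A $$ (i div dim_row B, j div dim_col B) * B $$ (i mod dim_row B, j mod dim_col B)"
  by (simp add: kron_def)
lemma rho_dim[simp]: "dim_row (rho_AB x t) = 4" "dim_col (rho_AB x t) = 4"
  by (simp_all add: rho_AB_def)
lemma proj_dim[simp]: "dim_row (proj_B n k) = 2" "dim_col (proj_B n k) = 2"
  by (simp_all add: proj_B_def)
lemma multent: "i < dim_row A \<Longrightarrow> j < dim_col B \<Longrightarrow> dim_col A = dim_row B \<Longrightarrow>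
   (A * B) $$ (i,j) = (\<Sum>k<dim_col A. A $$ (i,k) * B $$ (k,j))"
  by (simp add: index_mult_mat scalar_prod_def atLeast0LessThan)
lemma sum4: "(\<Sum>k<4::nat. f k) = f 0 + f 1 + f 2 + f 3"
  by (simp add: eval_nat_numeral)
lemma sum2: "(\<Sum>k<2::nat. f k) = f 0 + f 1"
  by (simp add: eval_nat_numeral)
lemma nrel: "n \<bullet> n = 1 \<Longrightarrow> n \<in> carrier_vec 3 \<Longrightarrow>
  complex_of_real (n$0) * complex_of_real (n$0) + complex_of_real (n$Suc 0) * complex_of_real (n$Suc 0) + complex_of_real (n$2) * complex_of_real (n$2) = 1"
proof -
  assume a: "n \<bullet> n = 1" "n \<in> carrier_vec 3"
  have "n$0 * n$0 + n$1 * n$1 + n$2*n$2 = 1" using a by (simp add: scalar_prod_def eval_nat_numeral)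
  then have "complex_of_real (n$0 * n$0 + n$1 * n$1 + n$2*n$2) = 1" by simp
  then show ?thesis by simp
qed
definition bv :: "real vec \<Rightarrow> real vec \<Rightarrow> real vec \<Rightarrow> real \<Rightarrow> real vec" where
  "bv x t n s = vec 3 (\<lambda>i. x$i + s * t$i * n$i)"
lemma bv_ent[simp]: "bv x t n s $ 0 = x$0 + s * t$0 * n$0" "bv x t n s $ Suc 0 = x$Suc 0 + s * t$Suc 0 * n$Suc 0"
   "bv x t n s $ 2 = x$2 + s * t$2 * n$2"
  by (simp_all add: bv_def)
lemma less2: "(i::nat) < 2 \<Longrightarrow> i = 0 \<or> i = Suc 0" by auto
lemma ptr0e: assumes "n \<bullet> n = 1" "n \<in> carrier_vec 3"
  shows "ptrace_B (post_meas (rho_AB x t) n 0) $$ (0,0) = ((1/4) \<cdot>\<^sub>m (1\<^sub>m 2 + dot_sigma (bv x t n 1))) $$ (0,0)"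
   "ptrace_B (post_meas (rho_AB x t) n 0) $$ (0,Suc 0) = ((1/4) \<cdot>\<^sub>m (1\<^sub>m 2 + dot_sigma (bv x t n 1))) $$ (0,Suc 0)"
   "ptrace_B (post_meas (rho_AB x t) n 0) $$ (Suc 0,0) = ((1/4) \<cdot>\<^sub>m (1\<^sub>m 2 + dot_sigma (bv x t n 1))) $$ (Suc 0,0)"
   "ptrace_B (post_meas (rho_AB x t) n 0) $$ (Suc 0,Suc 0) = ((1/4) \<cdot>\<^sub>m (1\<^sub>m 2 + dot_sigma (bv x t n 1))) $$ (Suc 0,Suc 0)"
    apply (simp_all add: ptrace_B_def post_meas_def multent sum4 sum2 kron_ent proj_B_def rho_AB_def del: index_mult_mat(1))
    apply (simp_all add: field_simps)
    apply (rule rev_mp[OF nrel[OF assms]], Groebner_Basis.algebra)+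
    done
lemma ptr1e: assumes "n \<bullet> n = 1" "n \<in> carrier_vec 3"
  shows "ptrace_B (post_meas (rho_AB x t) n (Suc 0)) $$ (0,0) = ((1/4) \<cdot>\<^sub>m (1\<^sub>m 2 + dot_sigma (bv x t n (-1)))) $$ (0,0)"
   "ptrace_B (post_meas (rho_AB x t) n (Suc 0)) $$ (0,Suc 0) = ((1/4) \<cdot>\<^sub>m (1\<^sub>m 2 + dot_sigma (bv x t n (-1)))) $$ (0,Suc 0)"
   "ptrace_B (post_meas (rho_AB x t) n (Suc 0)) $$ (Suc 0,0) = ((1/4) \<cdot>\<^sub>m (1\<^sub>m 2 + dot_sigma (bv x t n (-1)))) $$ (Suc 0,0)"
   "ptrace_B (post_meas (rho_AB x t) n (Suc 0)) $$ (Suc 0,Suc 0) = ((1/4) \<cdot>\<^sub>m (1\<^sub>m 2 + dot_sigma (bv x t n (-1)))) $$ (Suc 0,Suc 0)"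
    apply (simp_all add: ptrace_B_def post_meas_def multent sum4 sum2 kron_ent proj_B_def rho_AB_def del: index_mult_mat(1))
    apply (simp_all add: field_simps)
    apply (rule rev_mp[OF nrel[OF assms]], Groebner_Basis.algebra)+
    done
lemma det1: "B \<in> carrier_mat 1 1 \<Longrightarrow> det B = B $$ (0,0)"
proof -
  assume B: "B \<in> carrier_mat 1 1"
  have "mat_delete B 0 0 \<in> carrier_mat 0 0" using mat_delete_carrier[OF B] by simp
  then show ?thesis using B by (subst laplace_expansion_column[of B 1 0]) (auto simp: cofactor_def)
qed
lemma det2: assumes "A \<in> carrier_mat 2 2"
  shows "det A = A$$(0,0)*A$$(1,1) - A$$(0,1)*A$$(1,0)"
proof -
  have "det A = (\<Sum>i<2. A $$ (i,0) * cofactor A i 0)"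
    by (rule laplace_expansion_column[OF assms]) simp
  also have "\<dots> = A$$(0,0)*A$$(1,1) - A$$(0,1)*A$$(1,0)"
    using assms by (simp add: sum2 cofactor_def det1 mat_delete_carrier mat_delete_def)
  finally show ?thesis .
qed
lemma charpoly2: assumes "A \<in> carrier_mat 2 2"
  shows "char_poly A = [: A$$(0,0)*A$$(1,1) - A$$(0,1)*A$$(1,0), -(A$$(0,0) + A$$(1,1)), 1:]"
  using assms by (simp add: char_poly_def char_poly_matrix_def det2 algebra_simps)
lemma order_lin: "order a [:-a, 1:] = (1::nat)"
  using order_power_n_n[of a 1] by simp
lemma order_lin2: "a \<noteq> b \<Longrightarrow> order a [:-b, 1:] = 0"
  by (rule order_0I) simp
lemma vn2: assumes A: "A \<in> carrier_mat 2 2" and tr: "A$$(0,0) + A$$(1,1) = 1"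
  and dt: "A$$(0,0)*A$$(1,1) - A$$(0,1)*A$$(1,0) = complex_of_real ((1 - r^2)/4)" and r: "r \<ge> 0"
  shows "vn_entropy A = h2 ((1+r)/2)"
proof -
  define l1 where "l1 = complex_of_real ((1+r)/2)"
  define l2 where "l2 = complex_of_real ((1-r)/2)"
  have e1: "((1+r)/2)*((1-r)/2) = (1 - r^2)/4" "(1+r)/2 + (1-r)/2 = (1::real)"
    by (simp_all add: power2_eq_square field_simps)
  have e: "l1 * l2 = complex_of_real ((1 - r^2)/4)" "l1 + l2 = 1"
    unfolding l1_def l2_def by (metis e1(1) of_real_mult) (metis e1(2) of_real_add of_real_1)
  have c0: "A$$(0,0)*A$$(1,1) - A$$(0,1)*A$$(1,0) = l1*l2" using dt e(1) by (simp only:)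
  have c1: "A$$(0,0) + A$$(1,1) = l1+l2" using tr e(2) by (simp only:)
  have cp: "char_poly A = [:-l1,1:] * [:-l2,1:]"
    by (simp only: charpoly2[OF A] c0 c1) (simp add: algebra_simps)
  have pl: "poly (char_poly A) l = (l - l1)*(l - l2)" for l by (simp add: cp algebra_simps)
  have roots: "{l. poly (char_poly A) l = 0} = {l1, l2}"
    by (auto simp: pl)
  have ne: "[:-l1,1:] * [:-l2,1:] \<noteq> 0" by simp
  show ?thesis
  proof (cases "r = 0")
    case True
    then have "l1 = l2" "Re l1 = 1/2" by (simp_all add: l1_def l2_def)
    then have "vn_entropy A = real (order l1 (char_poly A)) * eta (Re l1)"
      unfolding vn_entropy_def roots by simp
    also have "eta (Re l1) = eta (1/2)" using \<open>Re l1 = 1/2\<close> by (simp only:)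
    also have "char_poly A = [:-l1,1:]^2" using cp \<open>l1 = l2\<close> by (simp add: power2_eq_square)
    also have "real (order l1 ([:-l1,1:]^2)) * eta (1/2) = 2 * eta (1/2)" by (simp only: order_power_n_n)
    finally show ?thesis using True by (simp add: h2_def)
  next
    case False
    then have d: "l1 \<noteq> l2" using r by (simp add: l1_def l2_def)
    have o1: "order l1 (char_poly A) = 1" unfolding cp
      using order_mult[OF ne, of l1] order_lin[of l1] order_lin2[OF d] by simp
    have o2: "order l2 (char_poly A) = 1" unfolding cp
      using order_mult[OF ne, of l2] order_lin[of l2] order_lin2[of l2 l1] d by simp
    have "vn_entropy A = eta (Re l1) + eta (Re l2)"
      unfolding vn_entropy_def roots using d o1 o2 by simp
    then show ?thesis by (simp add: h2_def l1_def l2_def field_simps)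
  qed
qed
definition sg :: "nat \<Rightarrow> real" where "sg k = (if k = 0 then 1 else -1)"
lemma ptr_ent: fixes x t n :: "real vec" assumes "n \<bullet> n = 1" "n \<in> carrier_vec 3" "k < 2"
  defines "b \<equiv> bv x t n (sg k)"
  shows "ptrace_B (post_meas (rho_AB x t) n k) $$ (0,0) = (1 + complex_of_real (b$2))/4"
   "ptrace_B (post_meas (rho_AB x t) n k) $$ (0,Suc 0) = (complex_of_real (b$0) - \<i> * complex_of_real (b$Suc 0))/4"
   "ptrace_B (post_meas (rho_AB x t) n k) $$ (Suc 0,0) = (complex_of_real (b$0) + \<i> * complex_of_real (b$Suc 0))/4"
   "ptrace_B (post_meas (rho_AB x t) n k) $$ (Suc 0,Suc 0) = (1 - complex_of_real (b$2))/4"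
proof -
  have "k = 0 \<or> k = Suc 0" using assms(3) by auto
  then show "ptrace_B (post_meas (rho_AB x t) n k) $$ (0,0) = (1 + complex_of_real (b$2))/4"
   "ptrace_B (post_meas (rho_AB x t) n k) $$ (0,Suc 0) = (complex_of_real (b$0) - \<i> * complex_of_real (b$Suc 0))/4"
   "ptrace_B (post_meas (rho_AB x t) n k) $$ (Suc 0,0) = (complex_of_real (b$0) + \<i> * complex_of_real (b$Suc 0))/4"
   "ptrace_B (post_meas (rho_AB x t) n k) $$ (Suc 0,Suc 0) = (1 - complex_of_real (b$2))/4"
    using ptr0e[OF assms(1,2)] ptr1e[OF assms(1,2)] by (auto simp: b_def sg_def)
qed
lemma ptr_dim[simp]: "dim_row (ptrace_B M) = 2" "dim_col (ptrace_B M) = 2"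
  by (simp_all add: ptrace_B_def)
lemma mtrace_ptr: "dim_row M = 4 \<Longrightarrow> mtrace M = ptrace_B M $$ (0,0) + ptrace_B M $$ (Suc 0,Suc 0)"
  by (simp add: mtrace_def ptrace_B_def sum4 sum2)
lemma pm_dim: "dim_row (post_meas (rho_AB x t) n k) = 4"
  by (simp add: post_meas_def)
lemma prob_half: assumes "n \<bullet> n = 1" "n \<in> carrier_vec 3" "k < 2"
  shows "meas_prob (rho_AB x t) n k = 1/2"
  unfolding meas_prob_def mtrace_ptr[OF pm_dim] ptr_ent[OF assms] by (simp add: field_simps)
lemma cond_vn: fixes x t n :: "real vec" assumes "n \<bullet> n = 1" "n \<in> carrier_vec 3" "k < 2"
  defines "b \<equiv> bv x t n (sg k)"
  shows "vn_entropy (rho_A_cond (rho_AB x t) n k) = h2 ((1 + sqrt ((b$0)^2 + (b$Suc 0)^2 + (b$2)^2))/2)"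
proof (rule vn2)
  let ?A = "rho_A_cond (rho_AB x t) n k"
  have p: "meas_prob (rho_AB x t) n k = 1/2" by (rule prob_half[OF assms(1-3)])
  have en: "?A $$ (0,0) = (1 + complex_of_real (b$2))/2"
   "?A $$ (0,Suc 0) = (complex_of_real (b$0) - \<i> * complex_of_real (b$Suc 0))/2"
   "?A $$ (Suc 0,0) = (complex_of_real (b$0) + \<i> * complex_of_real (b$Suc 0))/2"
   "?A $$ (Suc 0,Suc 0) = (1 - complex_of_real (b$2))/2"
    unfolding rho_A_cond_def p
    by (simp_all add: b_def ptr_ent[OF assms(1-3)])
  show "?A \<in> carrier_mat 2 2" by (simp add: rho_A_cond_def ptrace_B_def)
  show "?A $$ (0,0) + ?A $$ (1,1) = 1" by (simp add: en field_simps)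
  have sq: "(sqrt ((b$0)^2 + (b$Suc 0)^2 + (b$2)^2))^2 = (b$0)^2 + (b$Suc 0)^2 + (b$2)^2" by simp
  show "?A $$ (0,0) * ?A $$ (1,1) - ?A $$ (0,1) * ?A $$ (1,0) =
     complex_of_real ((1 - (sqrt ((b$0)^2 + (b$Suc 0)^2 + (b$2)^2))^2)/4)"
    unfolding sq by (simp add: en field_simps power2_eq_square)
  show "sqrt ((b$0)^2 + (b$Suc 0)^2 + (b$2)^2) \<ge> 0" by simp
qed
lemma sum3: "(\<Sum>k\<in>{0..<3::nat}. f k) = f 0 + f 1 + f 2"
  by (simp add: eval_nat_numeral)
lemma dot3: "u \<in> carrier_vec 3 \<Longrightarrow> v \<in> carrier_vec 3 \<Longrightarrow> u \<bullet> v = u$0*v$0 + u$1*v$1 + u$2*v$2"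
  for u v :: "real vec"
  by (simp add: scalar_prod_def sum3)
lemma Tmat_ent[simp]: "i < 3 \<Longrightarrow> j < 3 \<Longrightarrow> Tmat t $$ (i,j) = (if i = j then t $ i else 0)"
  by (simp add: Tmat_def)
lemma Tmat_dim[simp]: "dim_row (Tmat t) = 3" "dim_col (Tmat t) = 3"
  by (simp_all add: Tmat_def)
lemma less3: "(i::nat) < 3 \<Longrightarrow> i = 0 \<or> i = 1 \<or> i = 2" by auto
lemma Tx: assumes "x \<in> carrier_vec 3" "i < 3"
  shows "(transpose_mat (Tmat t) *\<^sub>v x) $ i = t$i * x$i"
proof -
  have "(transpose_mat (Tmat t) *\<^sub>v x) $ i = (\<Sum>j\<in>{0..<3}. Tmat t $$ (j,i) * x $ j)"
    using assms by (simp add: scalar_prod_def)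
  also have "\<dots> = t$i * x$i" using less3[OF assms(2)] by (auto simp: sum3)
  finally show ?thesis .
qed
lemma TTn: assumes "n \<in> carrier_vec 3" "i < 3"
  shows "((transpose_mat (Tmat t) * Tmat t) *\<^sub>v n) $ i = (t$i)^2 * n$i"
proof -
  have "((transpose_mat (Tmat t) * Tmat t) *\<^sub>v n) $ i = (\<Sum>j\<in>{0..<3}. (\<Sum>l\<in>{0..<3}. Tmat t $$ (l,i) * Tmat t $$ (l,j)) * n $ j)"
    using assms by (simp add: scalar_prod_def)
  also have "\<dots> = (t$i)^2 * n$i" using less3[OF assms(2)] by (auto simp: sum3 power2_eq_square)
  finally show ?thesis .
qed
lemma cond_formula: fixes x t n :: "real vec"
  assumes n: "n \<bullet> n = 1" "n \<in> carrier_vec 3" and x: "x \<in> carrier_vec 3"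
  and hyp: "transpose_mat (Tmat t) *\<^sub>v x = 0\<^sub>v 3"
  shows "cond_entropy (rho_AB x t) n = h2 ((1 + sqrt (x \<bullet> x + ((t$0*n$0)^2 + (t$1*n$1)^2 + (t$2*n$2)^2)))/2)"
proof -
  have z: "t$i * x$i = 0" if "i < 3" for i
    using arg_cong[OF hyp, of "\<lambda>v. v $ i"] Tx[OF x that, of t] that by simp
  have z0: "t$0*x$0 = 0" and z1: "t$1*x$1 = 0" and z2: "t$2*x$2 = 0" using z by auto
  have bq: "(bv x t n (sg k) $ 0)^2 + (bv x t n (sg k) $ Suc 0)^2 + (bv x t n (sg k) $ 2)^2
      = x \<bullet> x + ((t$0*n$0)^2 + (t$1*n$1)^2 + (t$2*n$2)^2)" for k
  proof -
    have s2: "sg k * sg k = 1" by (simp add: sg_def)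
    have "(bv x t n (sg k) $ 0)^2 + (bv x t n (sg k) $ Suc 0)^2 + (bv x t n (sg k) $ 2)^2
      = (x$0)^2 + (x$1)^2 + (x$2)^2 + 2 * sg k * (n$0 * (t$0*x$0) + n$1 * (t$1*x$1) + n$2*(t$2*x$2))
        + sg k * sg k * ((t$0*n$0)^2 + (t$1*n$1)^2 + (t$2*n$2)^2)"
      by (simp add: power2_eq_square algebra_simps)
    also have "\<dots> = x \<bullet> x + ((t$0*n$0)^2 + (t$1*n$1)^2 + (t$2*n$2)^2)"
      unfolding z0 z1 z2 s2 using dot3[OF x x] by (simp add: power2_eq_square)
    finally show ?thesis .
  qed
  show ?thesis
    unfolding cond_entropy_def using n
    by (simp add: sum2 prob_half cond_vn bq del: bv_ent)
qed
definition gf :: "real \<Rightarrow> real" where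
  "gf y = -(((1+y)/2) * ln((1+y)/2) + ((1-y)/2) * ln((1-y)/2)) / ln 2"
lemma gf_deriv: assumes "-1 < y" "y < 1"
  shows "DERIV gf y :> -((ln((1+y)/2) - ln((1-y)/2))/2)/ln 2"
proof -
  have A: "((\<lambda>y. ((1+y)/2) * ln((1+y)/2)) has_real_derivative (ln((1+y)/2)+1)/2) (at y)"
    using assms by (auto intro!: derivative_eq_intros simp: field_simps)
  have B: "((\<lambda>y. ((1-y)/2) * ln((1-y)/2)) has_real_derivative -(ln((1-y)/2)+1)/2) (at y)"
    using assms by (auto intro!: derivative_eq_intros simp: field_simps)
  have "((\<lambda>y. -(((1+y)/2) * ln((1+y)/2) + ((1-y)/2) * ln((1-y)/2)) / ln 2) has_real_derivative
     -((ln((1+y)/2)+1)/2 + -(ln((1-y)/2)+1)/2) / ln 2) (at y)"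
    by (intro DERIV_cdivide DERIV_minus DERIV_add A B)
  then show ?thesis unfolding gf_def by (simp add: field_simps)
qed
lemma gf_h2: "-1 < y \<Longrightarrow> y < 1 \<Longrightarrow> h2 ((1+y)/2) = gf y"
  by (simp add: h2_def eta_def gf_def log_def field_simps)
lemma eta_nonneg: "0 \<le> u \<Longrightarrow> u \<le> 1 \<Longrightarrow> 0 \<le> eta u"
  by (auto simp: eta_def mult_nonneg_nonpos)
lemma eta_nonpos: "1 \<le> u \<Longrightarrow> eta u \<le> 0"
  by (auto simp: eta_def)
lemma g_mono: assumes "0 \<le> r" "r \<le> s" shows "h2 ((1+s)/2) \<le> h2 ((1+r)/2)"
proof (cases "s < 1")
  case True
  have "gf s \<le> gf r"
  proof (rule DERIV_nonpos_imp_nonincreasing[OF assms(2)])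
    fix y assume "r \<le> y" "y \<le> s"
    then have y: "-1 < y" "y < 1" "0 \<le> y" using assms True by auto
    have "ln((1-y)/2) \<le> ln((1+y)/2)" using y by simp
    then have "-((ln((1+y)/2) - ln((1-y)/2))/2)/ln 2 \<le> 0" by (simp add: divide_nonpos_pos)
    then show "\<exists>d. DERIV gf y :> d \<and> d \<le> 0" using gf_deriv[OF y(1,2)] by blast
  qed
  then show ?thesis using gf_h2[of s] gf_h2[of r] assms True by simp
next
  case False
  have s1: "h2 ((1+s)/2) = eta ((1+s)/2)" using False by (simp add: h2_def eta_def)
  show ?thesis
  proof (cases "r < 1")
    case True
    have "0 \<le> h2 ((1+r)/2)" unfolding h2_def using assms True
      by (intro add_nonneg_nonneg eta_nonneg) auto
    moreover have "eta ((1+s)/2) \<le> 0" using False by (intro eta_nonpos) simp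
    ultimately show ?thesis using s1 by simp
  next
    case False
    have r1: "h2 ((1+r)/2) = eta ((1+r)/2)" using False by (simp add: h2_def eta_def)
    have "((1+r)/2) * log 2 ((1+r)/2) \<le> ((1+s)/2) * log 2 ((1+s)/2)"
      using False assms by (intro mult_mono) auto
    then show ?thesis unfolding s1 r1 eta_def using False assms by auto
  qed
qed
theorem mainTheorem3:
  fixes x t :: "real vec"
  assumes "x \<in> carrier_vec 3" and "t \<in> carrier_vec 3"
    and "density_matrix 4 (rho_AB x t)"
    and "transpose_mat (Tmat t) *\<^sub>v x = 0\<^sub>v 3"
  shows "(\<forall>n \<in> carrier_vec 3. n \<bullet> n = 1 \<longrightarrow>
            h2 ((1 + sqrt (x \<bullet> x + (Max {\<bar>t $ i\<bar> | i. i < 3})\<^sup>2)) / 2) \<le> cond_entropy (rho_AB x t) n)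
       \<and> (\<exists>n \<in> carrier_vec 3. n \<bullet> n = 1 \<and>
            (transpose_mat (Tmat t) * Tmat t) *\<^sub>v n = (Max {\<bar>t $ i\<bar> | i. i < 3})\<^sup>2 \<cdot>\<^sub>v n)
       \<and> (\<forall>n \<in> carrier_vec 3. n \<bullet> n = 1 \<longrightarrow>
            (transpose_mat (Tmat t) * Tmat t) *\<^sub>v n = (Max {\<bar>t $ i\<bar> | i. i < 3})\<^sup>2 \<cdot>\<^sub>v n \<longrightarrow>
            cond_entropy (rho_AB x t) n = h2 ((1 + sqrt (x \<bullet> x + (Max {\<bar>t $ i\<bar> | i. i < 3})\<^sup>2)) / 2))"
proof -
  define M where "M = Max {\<bar>t $ i\<bar> | i. i < 3}"
  have Seq: "{\<bar>t $ i\<bar> | i. i < 3} = (\<lambda>i. \<bar>t $ i\<bar>) ` {..<3}" by auto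
  have fin: "finite {\<bar>t $ i\<bar> | i. i < 3}" "{\<bar>t $ i\<bar> | i. i < 3} \<noteq> {}"
    unfolding Seq by (simp_all add: lessThan_empty_iff)
  have geM: "\<bar>t $ i\<bar> \<le> M" if "i < 3" for i
    unfolding M_def using fin that by (intro Max_ge) auto
  obtain i0 where i0: "i0 < 3" "\<bar>t $ i0\<bar> = M"
    using Max_in[OF fin] unfolding M_def by auto
  have sqM: "(t$i)^2 \<le> M^2" if "i < 3" for i
    using geM[OF that] by (metis abs_ge_zero order_trans power2_abs power_mono)
  have xx: "0 \<le> x \<bullet> x" using dot3[OF assms(1) assms(1)] by simp
  have Q: "(t$0*n$0)^2 + (t$1*n$1)^2 + (t$2*n$2)^2 = (t$0)^2*(n$0)^2 + (t$1)^2*(n$1)^2 + (t$2)^2*(n$2)^2" for n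
    by (simp add: power_mult_distrib)
  have P1: "h2 ((1 + sqrt (x \<bullet> x + M\<^sup>2)) / 2) \<le> cond_entropy (rho_AB x t) n"
    if n: "n \<in> carrier_vec 3" "n \<bullet> n = 1" for n
  proof -
    have nn: "(n$0)^2 + (n$1)^2 + (n$2)^2 = 1" using dot3[OF n(1) n(1)] n(2) by (simp add: power2_eq_square)
    have "(t$0)^2*(n$0)^2 + (t$1)^2*(n$1)^2 + (t$2)^2*(n$2)^2 \<le> M^2*(n$0)^2 + M^2*(n$1)^2 + M^2*(n$2)^2"
      by (intro add_mono mult_right_mono sqM) auto
    also have "\<dots> = M^2" using nn by (simp add: algebra_simps flip: distrib_left)
    finally have le: "(t$0*n$0)^2 + (t$1*n$1)^2 + (t$2*n$2)^2 \<le> M^2" unfolding Q .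
    have "h2 ((1 + sqrt (x \<bullet> x + M\<^sup>2)) / 2) \<le> h2 ((1 + sqrt (x \<bullet> x + ((t$0*n$0)^2 + (t$1*n$1)^2 + (t$2*n$2)^2)))/2)"
      using le xx by (intro g_mono) auto
    then show ?thesis using cond_formula[OF n(2) n(1) assms(1) assms(4)] by simp
  qed
  define e where "e = vec 3 (\<lambda>j. if j = i0 then 1 else 0::real)"
  have e: "e \<in> carrier_vec 3" "e \<bullet> e = 1" using i0(1) unfolding e_def
    by (auto simp: dot3 less3 dest!: less3)
  have P2: "(transpose_mat (Tmat t) * Tmat t) *\<^sub>v e = M\<^sup>2 \<cdot>\<^sub>v e"
  proof (rule eq_vecI)
    fix j assume "j < dim_vec (M\<^sup>2 \<cdot>\<^sub>v e)"
    then have j: "j < 3" using e by simp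
    have "(t$i0)^2 = M^2" using i0(2) by (metis power2_abs)
    then show "((transpose_mat (Tmat t) * Tmat t) *\<^sub>v e) $ j = (M\<^sup>2 \<cdot>\<^sub>v e) $ j"
      using TTn[OF e(1) j] j by (simp add: e_def)
  qed (use e in simp)
  have P3: "cond_entropy (rho_AB x t) n = h2 ((1 + sqrt (x \<bullet> x + M\<^sup>2)) / 2)"
    if n: "n \<in> carrier_vec 3" "n \<bullet> n = 1" and ev: "(transpose_mat (Tmat t) * Tmat t) *\<^sub>v n = M\<^sup>2 \<cdot>\<^sub>v n" for n
  proof -
    have nn: "(n$0)^2 + (n$1)^2 + (n$2)^2 = 1" using dot3[OF n(1) n(1)] n(2) by (simp add: power2_eq_square)
    have c: "(t$j)^2 * n$j = M^2 * n$j" if "j < 3" for j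
      using arg_cong[OF ev, of "\<lambda>v. v $ j"] TTn[OF n(1) that] that n(1) by simp
    have "(t$0)^2*(n$0)^2 + (t$1)^2*(n$1)^2 + (t$2)^2*(n$2)^2 = ((t$0)^2*n$0)*n$0 + ((t$1)^2*n$1)*n$1 + ((t$2)^2*n$2)*n$2"
      by (simp add: power2_eq_square)
    also have "\<dots> = (M^2*n$0)*n$0 + (M^2*n$1)*n$1 + (M^2*n$2)*n$2" 
    proof -
      have c0: "(t$0)^2 * n$0 = M^2 * n$0" by (rule c) simp
      have c1: "(t$1)^2 * n$1 = M^2 * n$1" by (rule c) simp
      have c2: "(t$2)^2 * n$2 = M^2 * n$2" by (rule c) simp
      show ?thesis by (simp only: c0 c1 c2)
    qed
    also have "\<dots> = M^2" using nn by (simp add: power2_eq_square algebra_simps flip: distrib_left)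
    finally have "(t$0*n$0)^2 + (t$1*n$1)^2 + (t$2*n$2)^2 = M^2" unfolding Q .
    then show ?thesis using cond_formula[OF n(2) n(1) assms(1) assms(4)] by simp
  qed
  show ?thesis unfolding M_def[symmetric] using P1 P2 P3 e by blast
qed
end
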